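(* Consider the system $x_{t+1} = A_t x_t + B_t u_t + w_t$ over horizon $T$ with stacked vectors $\mathbf{x} = (x_0,\dots,x_{T-1})$, $\mathbf{u} = (u_0,\dots,u_{T-1})$, $\mathbf{w} = (x_0,w_0,\dots,w_{T-2})$, so that $\mathbf{x} = \mathbf{F}\mathbf{u} + \mathbf{G}\mathbf{w}$ with $\mathbf{F} = (\mathbf{I}-\mathbf{Z}\mathbf{A})^{-1}\mathbf{Z}\mathbf{B}$, $\mathbf{G} = (\mathbf{I}-\mathbf{Z}\mathbf{A})^{-1}$. Let $\mathbf{Q}\succeq 0$, $\mathbf{R}\succ 0$, $J(\bm{\pi},\mathbf{w}) = \mathbf{x}^\top\mathbf{Q}\mathbf{x} + \mathbf{u}^\top\mathbf{R}\mathbf{u}$, and let $\bm{\psi}^\star$ be the unconstrained clairvoyant optimal policy, $\mathbf{u}_{\psi^\star} = -(\mathbf{R}+\mathbf{F}^\top\mathbf{Q}\mathbf{F})^{-1}\mathbf{F}^\top\mathbf{Q}\mathbf{G}\mathbf{w}$, $\mathbf{x}_{\psi^\star} = \mathbf{F}\mathbf{u}_{\psi^\star}+\mathbf{G}\mathbf{w}$. Assume $\mathbf{w}$ is random with distribution $\mathcal{D}$ having mean $\bm{\mu}_\mathbf{w}$ and covariance $\Sigma_\mathbf{w}\succeq 0$. Then, over linear control policies $\bm{\pi}$ (causal linear state feedback $\mathbf{u}=\mathbf{K}\mathbf{x}$ with $\mathbf{K}$ block lower-triangular), the set of minimizers of $$\mathbb{E}\big[(\mathbf{x}-\mathbf{x}_{\psi^\star})^\top\mathbf{Q}(\mathbf{x}-\mathbf{x}_{\psi^\star})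 + (\mathbf{u}-\mathbf{u}_{\psi^\star})^\top\mathbf{R}(\mathbf{u}-\mathbf{u}_{\psi^\star})\big]$$ coincides with $\operatorname{argmin}_{\bm{\pi}} \mathbb{E}[J(\bm{\pi},\mathbf{w})]$.
   Context: $\mathbf{Z}$ is the block-downshift matrix (identity blocks on the first block sub-diagonal, zeros elsewhere), $\mathbf{A} = \operatorname{blkdiag}(A_0,\dots,A_{T-2},0_{n\times n})$, $\mathbf{B} = \operatorname{blkdiag}(B_0,\dots,B_{T-2},0_{n\times m})$. $\mathbf{x},\mathbf{u}$ denote the closed-loop trajectories under $\bm{\pi}$ driven by $\mathbf{w}$; expectations are with respect to $\mathbf{w}\sim\mathcal{D}$. *)

theory Defs
  imports "HOL-Probability.Probability_Measure" "Jordan_Normal_Form.Gauss_Jordan_Elimination"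
begin

(* Horizon T, state dimension n, input dimension m.
   Stacked vectors: x, w in R^(n*T), u in R^(m*T); block t of a stacked state vector
   consists of the indices t*n .. t*n+n-1. *)

definition inv_mat :: "real mat \<Rightarrow> real mat" where
  "inv_mat M = the (mat_inverse M)"

definition psd_mat :: "nat \<Rightarrow> real mat \<Rightarrow> bool" where
  "psd_mat N M \<longleftrightarrow> M \<in> carrier_mat N N \<and> transpose_mat M = M \<and>
     (\<forall>v \<in> carrier_vec N. 0 \<le> scalar_prod v (mult_mat_vec M v))"

definition pd_mat :: "nat \<Rightarrow> real mat \<Rightarrow> bool" where
  "pd_mat N M \<longleftrightarrow> M \<in> carrier_mat N N \<and> transpose_mat M = M \<and>
     (\<forall>v \<in> carrier_vec N. v \<noteq> 0\<^sub>v N \<longrightarrow> 0 < scalar_prod v (mult_mat_vec M v))"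

definition Zmat :: "nat \<Rightarrow> nat \<Rightarrow> real mat" where
  "Zmat n T = mat (n*T) (n*T) (\<lambda>(i,j). if i div n = j div n + 1 \<and> i mod n = j mod n then 1 else 0)"

definition blkA :: "nat \<Rightarrow> nat \<Rightarrow> (nat \<Rightarrow> real mat) \<Rightarrow> real mat" where
  "blkA n T A = mat (n*T) (n*T) (\<lambda>(i,j). if i div n = j div n \<and> i div n + 1 < T
       then A (i div n) $$ (i mod n, j mod n) else 0)"

definition blkB :: "nat \<Rightarrow> nat \<Rightarrow> nat \<Rightarrow> (nat \<Rightarrow> real mat) \<Rightarrow> real mat" where
  "blkB n m T B = mat (n*T) (m*T) (\<lambda>(i,j). if i div n = j div m \<and> i div n + 1 < T
       then B (i div n) $$ (i mod n, j mod m) else 0)"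

definition Gmat :: "nat \<Rightarrow> nat \<Rightarrow> (nat \<Rightarrow> real mat) \<Rightarrow> real mat" where
  "Gmat n T A = inv_mat (1\<^sub>m (n*T) - Zmat n T * blkA n T A)"

definition Fmat :: "nat \<Rightarrow> nat \<Rightarrow> nat \<Rightarrow> (nat \<Rightarrow> real mat) \<Rightarrow> (nat \<Rightarrow> real mat) \<Rightarrow> real mat" where
  "Fmat n m T A B = Gmat n T A * (Zmat n T * blkB n m T B)"

definition causal_gains :: "nat \<Rightarrow> nat \<Rightarrow> nat \<Rightarrow> real mat set" where
  "causal_gains n m T = {K. K \<in> carrier_mat (m*T) (n*T) \<and>
      (\<forall>i < m*T. \<forall>j < n*T. i div m < j div n \<longrightarrow> K $$ (i,j) = 0)}"

text \<open>Closed-loop trajectories under u = K x, x = F u + G w.\<close>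
definition cl_x :: "nat \<Rightarrow> nat \<Rightarrow> nat \<Rightarrow> (nat \<Rightarrow> real mat) \<Rightarrow> (nat \<Rightarrow> real mat) \<Rightarrow> real mat \<Rightarrow> real vec \<Rightarrow> real vec" where
  "cl_x n m T A B K w = mult_mat_vec (inv_mat (1\<^sub>m (n*T) - Fmat n m T A B * K)) (mult_mat_vec (Gmat n T A) w)"

definition cl_u :: "nat \<Rightarrow> nat \<Rightarrow> nat \<Rightarrow> (nat \<Rightarrow> real mat) \<Rightarrow> (nat \<Rightarrow> real mat) \<Rightarrow> real mat \<Rightarrow> real vec \<Rightarrow> real vec" where
  "cl_u n m T A B K w = mult_mat_vec K (cl_x n m T A B K w)"

definition opt_u :: "nat \<Rightarrow> nat \<Rightarrow> nat \<Rightarrow> (nat \<Rightarrow> real mat) \<Rightarrow> (nat \<Rightarrow> real mat) \<Rightarrow> real mat \<Rightarrow> real mat \<Rightarrow> real vec \<Rightarrow> real vec" where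
  "opt_u n m T A B Q R w =
     (let F = Fmat n m T A B; G = Gmat n T A in
      - mult_mat_vec (inv_mat (R + transpose_mat F * Q * F) * transpose_mat F * Q * G) w)"

definition opt_x :: "nat \<Rightarrow> nat \<Rightarrow> nat \<Rightarrow> (nat \<Rightarrow> real mat) \<Rightarrow> (nat \<Rightarrow> real mat) \<Rightarrow> real mat \<Rightarrow> real mat \<Rightarrow> real vec \<Rightarrow> real vec" where
  "opt_x n m T A B Q R w = mult_mat_vec (Fmat n m T A B) (opt_u n m T A B Q R w) + mult_mat_vec (Gmat n T A) w"

definition quad :: "real mat \<Rightarrow> real vec \<Rightarrow> real" where
  "quad M v = scalar_prod v (mult_mat_vec M v)"

definition exp_cost :: "'a measure \<Rightarrow> ('a \<Rightarrow> real vec) \<Rightarrow> nat \<Rightarrow> nat \<Rightarrow> nat \<Rightarrow> (nat \<Rightarrow> real mat) \<Rightarrow> (nat \<Rightarrow> real mat) \<Rightarrow> real mat \<Rightarrow> real mat \<Rightarrow> real mat \<Rightarrow> real" where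
  "exp_cost M w n m T A B Q R K =
     integral\<^sup>L M (\<lambda>\<omega>. quad Q (cl_x n m T A B K (w \<omega>)) + quad R (cl_u n m T A B K (w \<omega>)))"

definition exp_dev :: "'a measure \<Rightarrow> ('a \<Rightarrow> real vec) \<Rightarrow> nat \<Rightarrow> nat \<Rightarrow> nat \<Rightarrow> (nat \<Rightarrow> real mat) \<Rightarrow> (nat \<Rightarrow> real mat) \<Rightarrow> real mat \<Rightarrow> real mat \<Rightarrow> real mat \<Rightarrow> real" where
  "exp_dev M w n m T A B Q R K =
     integral\<^sup>L M (\<lambda>\<omega>. quad Q (cl_x n m T A B K (w \<omega>) - opt_x n m T A B Q R (w \<omega>))
                     + quad R (cl_u n m T A B K (w \<omega>) - opt_u n m T A B Q R (w \<omega>)))"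

definition argmin_on :: "'b set \<Rightarrow> ('b \<Rightarrow> real) \<Rightarrow> 'b set" where
  "argmin_on S f = {k \<in> S. \<forall>k' \<in> S. f k \<le> f k'}"

end

theory Submission
  imports Defs "Jordan_Normal_Form.Determinant"
begin


definition L2 :: "'a measure \<Rightarrow> ('a \<Rightarrow> real) \<Rightarrow> bool" where
  "L2 M f \<longleftrightarrow> f \<in> borel_measurable M \<and> integrable M (\<lambda>x. (f x)^2)"

lemma abs_mult_le_sq: "\<bar>(a::real) * b\<bar> \<le> a^2 + b^2"
proof -
  have "0 \<le> (\<bar>a\<bar> - \<bar>b\<bar>)^2" by simp
  hence "2*(\<bar>a\<bar>*\<bar>b\<bar>) \<le> a^2 + b^2" by (simp add: power2_eq_square algebra_simps)
  moreover have "0 \<le> a^2" "0 \<le> b^2" by simp_all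
  ultimately show ?thesis unfolding abs_mult
    using mult_nonneg_nonneg[OF abs_ge_zero abs_ge_zero, of a b] by linarith
qed

lemma L2_mult: assumes "L2 M f" "L2 M g" shows "integrable M (\<lambda>x. f x * g x)"
proof (rule Bochner_Integration.integrable_bound[of M "\<lambda>x. (f x)^2 + (g x)^2"])
  show "integrable M (\<lambda>x. (f x)^2 + (g x)^2)" using assms unfolding L2_def by auto
  show "(\<lambda>x. f x * g x) \<in> borel_measurable M" using assms unfolding L2_def by auto
  show "AE x in M. norm (f x * g x) \<le> norm ((f x)^2 + (g x)^2)"
    using abs_mult_le_sq by auto
qed

lemma L2_add: assumes "L2 M f" "L2 M g" shows "L2 M (\<lambda>x. f x + g x)"
proof -
  have "integrable M (\<lambda>x. (f x)^2 + 2 * (f x * g x) + (g x)^2)"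
    using assms L2_mult[OF assms] unfolding L2_def by auto
  moreover have "(\<lambda>x. (f x)^2 + 2 * (f x * g x) + (g x)^2) = (\<lambda>x. (f x + g x)^2)"
    by (simp add: power2_eq_square algebra_simps)
  ultimately show ?thesis using assms unfolding L2_def by auto
qed

lemma L2_cmult: assumes "L2 M f" shows "L2 M (\<lambda>x. c * f x)"
proof -
  have "integrable M (\<lambda>x. c^2 * (f x)^2)" using assms unfolding L2_def by auto
  moreover have "(\<lambda>x. c^2 * (f x)^2) = (\<lambda>x. (c * f x)^2)" by (simp add: power_mult_distrib)
  ultimately show ?thesis using assms unfolding L2_def by auto
qed

lemma L2_zero: "L2 M (\<lambda>x. 0)" unfolding L2_def by auto

lemma L2_sum: assumes "finite I" "\<And>i. i \<in> I \<Longrightarrow> L2 M (f i)" shows "L2 M (\<lambda>x. \<Sum>i\<in>I. f i x)"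
  using assms by (induction I rule: finite_induct) (auto intro: L2_add L2_zero)

lemma L2_cong: assumes "L2 M f" "\<And>x. x \<in> space M \<Longrightarrow> f x = g x" shows "L2 M g"
proof -
  have "g \<in> borel_measurable M" using assms(1) measurable_cong[of M f g] assms(2) unfolding L2_def by blast
  moreover have "integrable M (\<lambda>x. (f x)^2) = integrable M (\<lambda>x. (g x)^2)"
    by (rule Bochner_Integration.integrable_cong[OF refl]) (simp add: assms(2))
  ultimately show ?thesis using assms(1) unfolding L2_def by blast
qed

definition vL2 :: "'a measure \<Rightarrow> nat \<Rightarrow> ('a \<Rightarrow> real vec) \<Rightarrow> bool" where
  "vL2 M d y \<longleftrightarrow> (\<forall>i<d. L2 M (\<lambda>x. vec_index (y x) i)) \<and> (\<forall>x\<in>space M. y x \<in> carrier_vec d)"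

lemma mult_vec_index_sum: assumes v: "v \<in> carrier_vec d" and L: "L \<in> carrier_mat r d" and i: "i < r"
  shows "(\<Sum>j\<in>{0..<d}. L $$ (i,j) * vec_index v j) = vec_index (L *\<^sub>v v) i"
proof -
  have dv: "dim_vec v = d" using v by (rule carrier_vecD)
  have dr: "dim_row L = r" and dc: "dim_col L = d" using L by (rule carrier_matD)+
  have "vec_index (L *\<^sub>v v) i = row L i \<bullet> v" using i dr by (rule_tac index_mult_mat_vec) simp
  also have "\<dots> = (\<Sum>j\<in>{0..<d}. vec_index (row L i) j * vec_index v j)" unfolding scalar_prod_def dv ..
  also have "\<dots> = (\<Sum>j\<in>{0..<d}. L $$ (i,j) * vec_index v j)"
    by (rule sum.cong) (use i dr dc in auto)
  finally show ?thesis by simp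
qed

lemma mult_vec_carrier: assumes "L \<in> carrier_mat r d" shows "L *\<^sub>v v \<in> carrier_vec r"
  using carrier_matD(1)[OF assms] by (intro carrier_vecI) simp

lemma vL2_mult: assumes L: "L \<in> carrier_mat r d" and y: "vL2 M d y"
  shows "vL2 M r (\<lambda>x. L *\<^sub>v y x)"
  unfolding vL2_def
proof (intro conjI allI impI ballI)
  fix i assume i: "i < r"
  have "L2 M (\<lambda>x. \<Sum>j\<in>{0..<d}. L $$ (i,j) * vec_index (y x) j)"
  proof (rule L2_sum)
    fix j assume "j \<in> {0..<d}"
    then have "L2 M (\<lambda>x. vec_index (y x) j)" using y unfolding vL2_def by simp
    then show "L2 M (\<lambda>x. L $$ (i,j) * vec_index (y x) j)" by (rule L2_cmult)
  qed simp
  then show "L2 M (\<lambda>x. vec_index (L *\<^sub>v y x) i)"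
  proof (rule L2_cong)
    fix x assume "x \<in> space M"
    then have "y x \<in> carrier_vec d" using y unfolding vL2_def by blast
    then show "(\<Sum>j\<in>{0..<d}. L $$ (i,j) * vec_index (y x) j) = vec_index (L *\<^sub>v y x) i"
      using L i by (rule mult_vec_index_sum)
  qed
next
  fix x show "L *\<^sub>v y x \<in> carrier_vec r" using L by (rule mult_vec_carrier)
qed

lemma vL2_add: assumes y: "vL2 M d y" and z: "vL2 M d z" shows "vL2 M d (\<lambda>x. y x + z x)"
  unfolding vL2_def
proof (intro conjI allI impI ballI)
  fix i assume i: "i < d"
  have "L2 M (\<lambda>x. vec_index (y x) i + vec_index (z x) i)"
    using y z i unfolding vL2_def by (simp add: L2_add)
  then show "L2 M (\<lambda>x. vec_index (y x + z x) i)"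
  proof (rule L2_cong)
    fix x assume "x \<in> space M"
    then have "z x \<in> carrier_vec d" using z unfolding vL2_def by auto
    then show "vec_index (y x) i + vec_index (z x) i = vec_index (y x + z x) i"
      using i by simp
  qed
next
  fix x assume "x \<in> space M" then show "y x + z x \<in> carrier_vec d"
    using y z unfolding vL2_def by simp
qed

lemma vL2_uminus: assumes y: "vL2 M d y" shows "vL2 M d (\<lambda>x. - y x)"
  unfolding vL2_def
proof (intro conjI allI impI ballI)
  fix i assume i: "i < d"
  have "L2 M (\<lambda>x. - vec_index (y x) i)"
    using L2_cmult[of M "\<lambda>x. vec_index (y x) i" "-1"] y i unfolding vL2_def by simp
  then show "L2 M (\<lambda>x. vec_index (- y x) i)"
  proof (rule L2_cong)
    fix x assume "x \<in> space M"
    then have "y x \<in> carrier_vec d" using y unfolding vL2_def by auto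
    then show "- vec_index (y x) i = vec_index (- y x) i"
      using i by simp
  qed
next
  fix x assume "x \<in> space M" then show "- y x \<in> carrier_vec d"
    using y unfolding vL2_def by simp
qed

lemma vL2_quad: assumes P: "P \<in> carrier_mat d d" and y: "vL2 M d y"
  shows "integrable M (\<lambda>x. quad P (y x))"
proof -
  have Py: "vL2 M d (\<lambda>x. P *\<^sub>v y x)" by (rule vL2_mult[OF P y])
  have i: "integrable M (\<lambda>x. \<Sum>i\<in>{0..<d}. vec_index (y x) i * vec_index (P *\<^sub>v y x) i)"
  proof (rule Bochner_Integration.integrable_sum)
    fix i assume "i \<in> {0..<d}"
    then have "L2 M (\<lambda>x. vec_index (y x) i)" "L2 M (\<lambda>x. vec_index (P *\<^sub>v y x) i)"
      using y Py unfolding vL2_def by simp_all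
    then show "integrable M (\<lambda>x. vec_index (y x) i * vec_index (P *\<^sub>v y x) i)" by (rule L2_mult)
  qed
  have eq: "\<And>x. x \<in> space M \<Longrightarrow> (\<Sum>i\<in>{0..<d}. vec_index (y x) i * vec_index (P *\<^sub>v y x) i) = quad P (y x)"
  proof -
    fix x assume "x \<in> space M"
    then have "y x \<in> carrier_vec d" using y unfolding vL2_def by auto
    then show "(\<Sum>i\<in>{0..<d}. vec_index (y x) i * vec_index (P *\<^sub>v y x) i) = quad P (y x)"
      using P unfolding quad_def scalar_prod_def by simp
  qed
  have "integrable M (\<lambda>x. \<Sum>i\<in>{0..<d}. vec_index (y x) i * vec_index (P *\<^sub>v y x) i) = integrable M (\<lambda>x. quad P (y x))"
    by (rule Bochner_Integration.integrable_cong[OF refl]) (rule eq)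
  then show ?thesis using i by blast
qed



definition slow :: "nat \<Rightarrow> nat \<Rightarrow> nat \<Rightarrow> nat \<Rightarrow> real mat \<Rightarrow> bool" where
  "slow r c p q N \<longleftrightarrow> (\<forall>i<r. \<forall>j<c. i div p \<le> j div q \<longrightarrow> N $$ (i,j) = 0)"

definition blow :: "nat \<Rightarrow> nat \<Rightarrow> nat \<Rightarrow> nat \<Rightarrow> real mat \<Rightarrow> bool" where
  "blow r c p q N \<longleftrightarrow> (\<forall>i<r. \<forall>j<c. i div p < j div q \<longrightarrow> N $$ (i,j) = 0)"

lemma mat_mult_index_sum: assumes A: "A \<in> carrier_mat r s" and B: "B \<in> carrier_mat s c"
  and i: "i < r" and j: "j < c"
  shows "(A * B) $$ (i,j) = (\<Sum>k\<in>{0..<s}. A $$ (i,k) * B $$ (k,j))"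
proof -
  have dA: "dim_row A = r" "dim_col A = s" using A by (rule carrier_matD)+
  have dB: "dim_row B = s" "dim_col B = c" using B by (rule carrier_matD)+
  have "(A * B) $$ (i,j) = Matrix.scalar_prod (row A i) (col B j)"
    using i j dA dB by (rule_tac index_mult_mat) simp_all
  also have "\<dots> = (\<Sum>k\<in>{0..<s}. vec_index (row A i) k * vec_index (col B j) k)"
    unfolding scalar_prod_def using dB by simp
  also have "\<dots> = (\<Sum>k\<in>{0..<s}. A $$ (i,k) * B $$ (k,j))"
    by (rule sum.cong) (use i j dA dB in auto)
  finally show ?thesis .
qed

lemma slow_mult_low: assumes N: "N \<in> carrier_mat r s" and K: "K \<in> carrier_mat s c"
  and sN: "slow r s p q N" and lK: "blow s c q t K"
  shows "slow r c p t (N * K)"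
  unfolding slow_def
proof (intro allI impI)
  fix i j assume i: "i < r" and j: "j < c" and ij: "i div p \<le> j div t"
  have "(N * K) $$ (i,j) = (\<Sum>k\<in>{0..<s}. N $$ (i,k) * K $$ (k,j))"
    by (rule mat_mult_index_sum[OF N K i j])
  also have "\<dots> = 0"
  proof (rule sum.neutral, rule ballI)
    fix k assume k: "k \<in> {0..<s}"
    show "N $$ (i,k) * K $$ (k,j) = 0"
    proof (cases "i div p \<le> k div q")
      case True then show ?thesis using sN i k unfolding slow_def by simp
    next
      case False then have "k div q < j div t" using ij by linarith
      then show ?thesis using lK j k unfolding blow_def by simp
    qed
  qed
  finally show "(N * K) $$ (i,j) = 0" .
qed

lemma low_mult_slow: assumes G: "G \<in> carrier_mat r s" and W: "W \<in> carrier_mat s c"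
  and lG: "blow r s p q G" and sW: "slow s c q t W"
  shows "slow r c p t (G * W)"
  unfolding slow_def
proof (intro allI impI)
  fix i j assume i: "i < r" and j: "j < c" and ij: "i div p \<le> j div t"
  have "(G * W) $$ (i,j) = (\<Sum>k\<in>{0..<s}. G $$ (i,k) * W $$ (k,j))"
    by (rule mat_mult_index_sum[OF G W i j])
  also have "\<dots> = 0"
  proof (rule sum.neutral, rule ballI)
    fix k assume k: "k \<in> {0..<s}"
    show "G $$ (i,k) * W $$ (k,j) = 0"
    proof (cases "i div p < k div q")
      case True then show ?thesis using lG i k unfolding blow_def by simp
    next
      case False then have "k div q \<le> j div t" using ij by linarith
      then show ?thesis using sW j k unfolding slow_def by simp
    qed
  qed
  finally show "(G * W) $$ (i,j) = 0" .
qed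

lemma slow_det: assumes N: "N \<in> carrier_mat d d" and sN: "slow d d p p N"
  shows "Determinant.det (1\<^sub>m d - N) = 1"
proof -
  have M: "1\<^sub>m d - N \<in> carrier_mat d d" using N by (rule minus_carrier_mat)
  have ent: "(1\<^sub>m d - N) $$ (i,j) = (if i = j then 1 else 0) - N $$ (i,j)" if "i < d" "j < d" for i j
    using that N by simp
  have "Determinant.det (1\<^sub>m d - N) = prod_list (diag_mat (1\<^sub>m d - N))"
  proof (rule det_lower_triangular[OF _ M])
    fix i j assume ij: "i < j" "j < d"
    then have "i div p \<le> j div p" by (simp add: div_le_mono)
    then have "N $$ (i,j) = 0" using sN ij unfolding slow_def by simp
    then show "(1\<^sub>m d - N) $$ (i,j) = 0" using ent[of i j] ij by simp
  qed
  also have "diag_mat (1\<^sub>m d - N) = map (\<lambda>i. 1) [0..<d]"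
  proof -
    have "diag_mat (1\<^sub>m d - N) = map (\<lambda>i. (1\<^sub>m d - N) $$ (i,i)) [0..<d]"
      unfolding diag_mat_def using carrier_matD(1)[OF N] by simp
    also have "\<dots> = map (\<lambda>i. 1) [0..<d]"
    proof (rule map_cong[OF refl])
      fix i assume "i \<in> set [0..<d]"
      then have i: "i < d" by simp
      then have "N $$ (i,i) = 0" using sN unfolding slow_def by simp
      then show "(1\<^sub>m d - N) $$ (i,i) = 1" using ent[of i i] i by simp
    qed
    finally show ?thesis .
  qed
  moreover have "prod_list (map (\<lambda>i. 1::real) xs) = 1" for xs :: "nat list" by (induction xs) simp_all
  ultimately show ?thesis by simp
qed

lemma inv_mat_props: assumes M: "M \<in> carrier_mat d d" and dM: "Determinant.det M \<noteq> 0"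
  shows "M * inv_mat M = 1\<^sub>m d" "inv_mat M * M = 1\<^sub>m d" "inv_mat M \<in> carrier_mat d d"
proof -
  have U: "M \<in> Units (ring_mat TYPE(real) d ())" by (rule det_non_zero_imp_unit[OF M dM])
  obtain B where B: "mat_inverse M = Some B"
  proof (cases "mat_inverse M")
    case None
    then have "M \<notin> Units (ring_mat TYPE(real) d ())" by (rule mat_inverse(1)[OF M])
    then show ?thesis using U by blast
  qed
  have "inv_mat M = B" unfolding inv_mat_def B by simp
  then show "M * inv_mat M = 1\<^sub>m d" "inv_mat M * M = 1\<^sub>m d" "inv_mat M \<in> carrier_mat d d"
    using mat_inverse(2)[OF M B] by simp_all
qed

lemma inv_low: assumes N: "N \<in> carrier_mat d d" and sN: "slow d d p p N"
  and Gi: "Gi \<in> carrier_mat d d" and inv: "(1\<^sub>m d - N) * Gi = 1\<^sub>m d"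
  shows "blow d d p p Gi"
proof -
  have eq: "Gi $$ (i,j) = (if i = j then 1 else 0) + (N * Gi) $$ (i,j)" if ij: "i < d" "j < d" for i j
  proof -
    have "(1\<^sub>m d - N) * Gi = 1\<^sub>m d * Gi - N * Gi"
      by (rule minus_mult_distrib_mat[OF one_carrier_mat N Gi])
    also have "1\<^sub>m d * Gi = Gi" by (rule left_mult_one_mat[OF Gi])
    finally have "Gi - N * Gi = 1\<^sub>m d" using inv by simp
    then have "(Gi - N * Gi) $$ (i,j) = 1\<^sub>m d $$ (i,j)" by simp
    moreover have "(Gi - N * Gi) $$ (i,j) = Gi $$ (i,j) - (N * Gi) $$ (i,j)"
      using ij N Gi by simp
    ultimately show ?thesis using ij by simp
  qed
  have main: "\<forall>i<d. i div p = b \<longrightarrow> i div p < j div p \<longrightarrow> Gi $$ (i,j) = 0" if j: "j < d" for j b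
  proof (induction b rule: less_induct)
    case (less b)
    show ?case
    proof (intro allI impI)
      fix i assume i: "i < d" and ib: "i div p = b" and ij: "i div p < j div p"
      have "(N * Gi) $$ (i,j) = (\<Sum>k\<in>{0..<d}. N $$ (i,k) * Gi $$ (k,j))"
        by (rule mat_mult_index_sum[OF N Gi i j])
      also have "\<dots> = 0"
      proof (rule sum.neutral, rule ballI)
        fix k assume k: "k \<in> {0..<d}"
        show "N $$ (i,k) * Gi $$ (k,j) = 0"
        proof (cases "i div p \<le> k div p")
          case True then show ?thesis using sN i k unfolding slow_def by simp
        next
          case False
          then have "k div p < b" "k div p < j div p" using ib ij by linarith+
          then have "Gi $$ (k,j) = 0" using less.IH k by simp
          then show ?thesis by simp
        qed
      qed
      finally have "(N * Gi) $$ (i,j) = 0" .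
      moreover have "i \<noteq> j" using ij by auto
      ultimately show "Gi $$ (i,j) = 0" using eq[OF i j] by simp
    qed
  qed
  show ?thesis unfolding blow_def using main by blast
qed



lemma quad_add: assumes Q: "Q \<in> carrier_mat d d" and QT: "transpose_mat Q = Q"
  and a: "a \<in> carrier_vec d" and b: "b \<in> carrier_vec d"
  shows "quad Q (a + b) = quad Q a + quad Q b + 2 * Matrix.scalar_prod a (Q *\<^sub>v b)"
proof -
  have Qa: "Q *\<^sub>v a \<in> carrier_vec d" using Q a by (rule mult_mat_vec_carrier)
  have Qb: "Q *\<^sub>v b \<in> carrier_vec d" using Q b by (rule mult_mat_vec_carrier)
  have "Q *\<^sub>v (a + b) = Q *\<^sub>v a + Q *\<^sub>v b" by (rule mult_add_distrib_mat_vec[OF Q a b])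
  then have "quad Q (a + b) = Matrix.scalar_prod (a + b) (Q *\<^sub>v a + Q *\<^sub>v b)" unfolding quad_def by simp
  also have "\<dots> = Matrix.scalar_prod a (Q *\<^sub>v a + Q *\<^sub>v b) + Matrix.scalar_prod b (Q *\<^sub>v a + Q *\<^sub>v b)"
    by (rule add_scalar_prod_distrib[OF a b]) (use Qa Qb in simp)
  also have "Matrix.scalar_prod a (Q *\<^sub>v a + Q *\<^sub>v b) = Matrix.scalar_prod a (Q *\<^sub>v a) + Matrix.scalar_prod a (Q *\<^sub>v b)"
    by (rule scalar_prod_add_distrib[OF a Qa Qb])
  also have "Matrix.scalar_prod b (Q *\<^sub>v a + Q *\<^sub>v b) = Matrix.scalar_prod b (Q *\<^sub>v a) + Matrix.scalar_prod b (Q *\<^sub>v b)"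
    by (rule scalar_prod_add_distrib[OF b Qa Qb])
  also have "Matrix.scalar_prod b (Q *\<^sub>v a) = Matrix.scalar_prod a (Q *\<^sub>v b)"
  proof -
    have "Matrix.scalar_prod (transpose_mat Q *\<^sub>v b) a = Matrix.scalar_prod b (Q *\<^sub>v a)"
      by (rule transpose_vec_mult_scalar[OF Q a b])
    then have "Matrix.scalar_prod (Q *\<^sub>v b) a = Matrix.scalar_prod b (Q *\<^sub>v a)" using QT by simp
    moreover have "Matrix.scalar_prod (Q *\<^sub>v b) a = Matrix.scalar_prod a (Q *\<^sub>v b)"
      by (rule comm_scalar_prod[OF Qb a])
    ultimately show ?thesis by simp
  qed
  finally show ?thesis unfolding quad_def by simp
qed

lemma pointwise:
  fixes Q R F G Hi :: "real mat"
  assumes Q: "Q \<in> carrier_mat d d" and QT: "transpose_mat Q = Q"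
    and R: "R \<in> carrier_mat e e" and RT: "transpose_mat R = R"
    and F: "F \<in> carrier_mat d e" and G: "G \<in> carrier_mat d d" and Hi: "Hi \<in> carrier_mat e e"
    and HH: "(R + transpose_mat F * Q * F) * Hi = 1\<^sub>m e"
    and v: "v \<in> carrier_vec d" and u: "u \<in> carrier_vec e"
    and x: "x = F *\<^sub>v u + G *\<^sub>v v"
    and us: "us = - ((Hi * transpose_mat F * Q * G) *\<^sub>v v)"
    and xs: "xs = F *\<^sub>v us + G *\<^sub>v v"
  shows "quad Q x + quad R u = quad Q (x - xs) + quad R (u - us) + (quad Q xs + quad R us)"
proof -
  define Ft where "Ft = transpose_mat F"
  have Ft: "Ft \<in> carrier_mat e d" unfolding Ft_def using F by simp
  define g where "g = G *\<^sub>v v"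
  have g: "g \<in> carrier_vec d" unfolding g_def using G v by (rule mult_mat_vec_carrier)
  define c where "c = Ft *\<^sub>v (Q *\<^sub>v g)"
  have Qg: "Q *\<^sub>v g \<in> carrier_vec d" using Q g by (rule mult_mat_vec_carrier)
  have c: "c \<in> carrier_vec e" unfolding c_def using Ft Qg by (rule mult_mat_vec_carrier)
  have HiFt: "Hi * Ft \<in> carrier_mat e d" using Hi Ft by (rule mult_carrier_mat)
  have HiFtQ: "Hi * Ft * Q \<in> carrier_mat e d" using HiFt Q by (rule mult_carrier_mat)
  have "(Hi * Ft * Q * G) *\<^sub>v v = (Hi * Ft * Q) *\<^sub>v g"
    unfolding g_def by (rule assoc_mult_mat_vec[OF HiFtQ G v])
  also have "\<dots> = (Hi * Ft) *\<^sub>v (Q *\<^sub>v g)" by (rule assoc_mult_mat_vec[OF HiFt Q g])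
  also have "\<dots> = Hi *\<^sub>v c" unfolding c_def by (rule assoc_mult_mat_vec[OF Hi Ft Qg])
  finally have us2: "us = - (Hi *\<^sub>v c)" unfolding us Ft_def by simp
  have Hic: "Hi *\<^sub>v c \<in> carrier_vec e" using Hi c by (rule mult_mat_vec_carrier)
  have usc: "us \<in> carrier_vec e" unfolding us2 using Hic by simp
  define H where "H = R + Ft * Q * F"
  have FtQ: "Ft * Q \<in> carrier_mat e d" using Ft Q by (rule mult_carrier_mat)
  have FtQF: "Ft * Q * F \<in> carrier_mat e e" using FtQ F by (rule mult_carrier_mat)
  have H: "H \<in> carrier_mat e e" unfolding H_def using FtQF by (rule add_carrier_mat)
  have "H *\<^sub>v (Hi *\<^sub>v c) = (H * Hi) *\<^sub>v c" by (rule assoc_mult_mat_vec[OF H Hi c, symmetric])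
  also have "H * Hi = 1\<^sub>m e" using HH unfolding H_def Ft_def .
  finally have HHic: "H *\<^sub>v (Hi *\<^sub>v c) = c" using c by simp
  have Hus: "H *\<^sub>v us = - c"
  proof (rule eq_vecI)
    fix i assume "i < dim_vec (- c)"
    then have i: "i < e" using c by simp
    have "(H *\<^sub>v us) $ i = Matrix.scalar_prod (row H i) us" using i H by simp
    also have "\<dots> = - Matrix.scalar_prod (row H i) (Hi *\<^sub>v c)" unfolding us2
      using H Hi by (simp add: scalar_prod_uminus_right)
    also have "Matrix.scalar_prod (row H i) (Hi *\<^sub>v c) = (H *\<^sub>v (Hi *\<^sub>v c)) $ i" using i H by simp
    finally show "(H *\<^sub>v us) $ i = (- c) $ i" using HHic i c by simp
  qed (use H c in simp)
  define xs' where "xs' = xs"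
  have Fus: "F *\<^sub>v us \<in> carrier_vec d" using F usc by (rule mult_mat_vec_carrier)
  have xsc: "xs \<in> carrier_vec d" unfolding xs using Fus g g_def by simp
  have Qxs: "Q *\<^sub>v xs \<in> carrier_vec d" using Q xsc by (rule mult_mat_vec_carrier)
  have key: "Ft *\<^sub>v (Q *\<^sub>v xs) + R *\<^sub>v us = 0\<^sub>v e"
  proof -
    have "Q *\<^sub>v xs = Q *\<^sub>v (F *\<^sub>v us) + Q *\<^sub>v g" unfolding xs g_def[symmetric]
      by (rule mult_add_distrib_mat_vec[OF Q Fus g])
    moreover have QFus: "Q *\<^sub>v (F *\<^sub>v us) \<in> carrier_vec d" using Q Fus by (rule mult_mat_vec_carrier)
    ultimately have "Ft *\<^sub>v (Q *\<^sub>v xs) = Ft *\<^sub>v (Q *\<^sub>v (F *\<^sub>v us)) + c"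
      unfolding c_def using mult_add_distrib_mat_vec[OF Ft QFus Qg] by simp
    also have "Ft *\<^sub>v (Q *\<^sub>v (F *\<^sub>v us)) = (Ft * Q * F) *\<^sub>v us"
      using assoc_mult_mat_vec[OF FtQ F usc] assoc_mult_mat_vec[OF Ft Q Fus] by simp
    finally have e1: "Ft *\<^sub>v (Q *\<^sub>v xs) = (Ft * Q * F) *\<^sub>v us + c" .
    have e2: "H *\<^sub>v us = R *\<^sub>v us + (Ft * Q * F) *\<^sub>v us"
      unfolding H_def by (rule add_mult_distrib_mat_vec[OF R FtQF usc])
    have d1: "(Ft * Q * F) *\<^sub>v us \<in> carrier_vec e" using FtQF usc by (rule mult_mat_vec_carrier)
    have d2: "R *\<^sub>v us \<in> carrier_vec e" using R usc by (rule mult_mat_vec_carrier)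
    show ?thesis
    proof (rule eq_vecI)
      fix i assume "i < dim_vec (0\<^sub>v e :: real vec)"
      then have i: "i < e" by simp
      have "(H *\<^sub>v us) $ i = (R *\<^sub>v us) $ i + ((Ft * Q * F) *\<^sub>v us) $ i"
        unfolding e2 using i carrier_vecD[OF d1] by simp
      then have "- c $ i = (R *\<^sub>v us) $ i + ((Ft * Q * F) *\<^sub>v us) $ i"
        unfolding Hus using i carrier_vecD[OF c] by simp
      then show "(Ft *\<^sub>v (Q *\<^sub>v xs) + R *\<^sub>v us) $ i = (0\<^sub>v e :: real vec) $ i"
        unfolding e1 using i carrier_vecD[OF d1] carrier_vecD[OF d2] carrier_vecD[OF c] by simp
    qed (use carrier_vecD[OF d2] in simp)
  qed
  define e0 where "e0 = u - us"
  have e0: "e0 \<in> carrier_vec e" unfolding e0_def using u usc by simp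
  have Fe0: "F *\<^sub>v e0 \<in> carrier_vec d" using F e0 by (rule mult_mat_vec_carrier)
  have Fu: "F *\<^sub>v u \<in> carrier_vec d" using F u by (rule mult_mat_vec_carrier)
  have a_eq0: "x - xs = F *\<^sub>v u - F *\<^sub>v us"
  proof (rule eq_vecI)
    fix i assume "i < dim_vec (F *\<^sub>v u - F *\<^sub>v us)"
    then have i: "i < d" using carrier_vecD[OF Fus] by simp
    show "(x - xs) $ i = (F *\<^sub>v u - F *\<^sub>v us) $ i" unfolding x xs g_def[symmetric]
      using i carrier_vecD[OF Fu] carrier_vecD[OF Fus] carrier_vecD[OF g] by (simp del: index_mult_mat_vec)
  next
    show "dim_vec (x - xs) = dim_vec (F *\<^sub>v u - F *\<^sub>v us)" unfolding x xs g_def[symmetric]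
      using carrier_vecD[OF Fu] carrier_vecD[OF Fus] carrier_vecD[OF g] by (simp del: index_mult_mat_vec)
  qed
  have a_eq: "x - xs = F *\<^sub>v e0"
    unfolding a_eq0 e0_def by (rule mult_minus_distrib_mat_vec[OF F u usc, symmetric])
  have xc: "x \<in> carrier_vec d" unfolding x g_def[symmetric] using Fu g by (rule add_carrier_vec)
  have x_eq: "x = F *\<^sub>v e0 + xs"
    unfolding a_eq[symmetric] by (intro eq_vecI) (use carrier_vecD[OF xsc] carrier_vecD[OF xc] in simp_all)
  have u_eq: "u = e0 + us"
    unfolding e0_def by (intro eq_vecI) (use carrier_vecD[OF usc] carrier_vecD[OF u] in simp_all)
  have qx: "quad Q x = quad Q (F *\<^sub>v e0) + quad Q xs + 2 * Matrix.scalar_prod (F *\<^sub>v e0) (Q *\<^sub>v xs)"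
    unfolding x_eq by (rule quad_add[OF Q QT Fe0 xsc])
  have qu: "quad R u = quad R e0 + quad R us + 2 * Matrix.scalar_prod e0 (R *\<^sub>v us)"
    unfolding u_eq by (rule quad_add[OF R RT e0 usc])
  have cross: "Matrix.scalar_prod (F *\<^sub>v e0) (Q *\<^sub>v xs) + Matrix.scalar_prod e0 (R *\<^sub>v us) = 0"
  proof -
    have "Matrix.scalar_prod (transpose_mat F *\<^sub>v (Q *\<^sub>v xs)) e0 = Matrix.scalar_prod (Q *\<^sub>v xs) (F *\<^sub>v e0)"
      by (rule transpose_vec_mult_scalar[OF F e0 Qxs])
    moreover have "Matrix.scalar_prod (Q *\<^sub>v xs) (F *\<^sub>v e0) = Matrix.scalar_prod (F *\<^sub>v e0) (Q *\<^sub>v xs)"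
      by (rule comm_scalar_prod[OF Qxs Fe0])
    moreover have FtQxs: "Ft *\<^sub>v (Q *\<^sub>v xs) \<in> carrier_vec e" using Ft Qxs by (rule mult_mat_vec_carrier)
    moreover have "Matrix.scalar_prod (Ft *\<^sub>v (Q *\<^sub>v xs)) e0 = Matrix.scalar_prod e0 (Ft *\<^sub>v (Q *\<^sub>v xs))"
      by (rule comm_scalar_prod[OF FtQxs e0])
    ultimately have "Matrix.scalar_prod (F *\<^sub>v e0) (Q *\<^sub>v xs) = Matrix.scalar_prod e0 (Ft *\<^sub>v (Q *\<^sub>v xs))"
      unfolding Ft_def by simp
    moreover have Rus: "R *\<^sub>v us \<in> carrier_vec e" using R usc by (rule mult_mat_vec_carrier)
    moreover have "Matrix.scalar_prod e0 (Ft *\<^sub>v (Q *\<^sub>v xs) + R *\<^sub>v us) =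
        Matrix.scalar_prod e0 (Ft *\<^sub>v (Q *\<^sub>v xs)) + Matrix.scalar_prod e0 (R *\<^sub>v us)"
      by (rule scalar_prod_add_distrib[OF e0 FtQxs Rus])
    ultimately show ?thesis unfolding key using e0 by simp
  qed
  show ?thesis unfolding a_eq e0_def[symmetric] using qx qu cross by simp
qed



lemma pd_det: assumes H: "H = R + transpose_mat F * Q * F" and R: "pd_mat e R" and Q: "psd_mat d Q"
  and F: "F \<in> carrier_mat d e"
  shows "Determinant.det H \<noteq> 0" "H \<in> carrier_mat e e"
proof -
  have Rc: "R \<in> carrier_mat e e" using R unfolding pd_mat_def by blast
  have Qc: "Q \<in> carrier_mat d d" using Q unfolding psd_mat_def by blast
  have Ft: "transpose_mat F \<in> carrier_mat e d" using F by simp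
  have FtQ: "transpose_mat F * Q \<in> carrier_mat e d" using Ft Qc by (rule mult_carrier_mat)
  have FtQF: "transpose_mat F * Q * F \<in> carrier_mat e e" using FtQ F by (rule mult_carrier_mat)
  show Hc: "H \<in> carrier_mat e e" unfolding H using FtQF by (rule add_carrier_mat)
  show "Determinant.det H \<noteq> 0"
  proof
    assume "Determinant.det H = 0"
    then obtain v where v: "v \<in> carrier_vec e" "v \<noteq> 0\<^sub>v e" "H *\<^sub>v v = 0\<^sub>v e"
      using det_0_iff_vec_prod_zero[OF Hc] by blast
    have Fv: "F *\<^sub>v v \<in> carrier_vec d" using F v(1) by (rule mult_mat_vec_carrier)
    have QFv: "Q *\<^sub>v (F *\<^sub>v v) \<in> carrier_vec d" using Qc Fv by (rule mult_mat_vec_carrier)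
    have FtQFv: "transpose_mat F *\<^sub>v (Q *\<^sub>v (F *\<^sub>v v)) \<in> carrier_vec e" using Ft QFv by (rule mult_mat_vec_carrier)
    have Rv: "R *\<^sub>v v \<in> carrier_vec e" using Rc v(1) by (rule mult_mat_vec_carrier)
    have "H *\<^sub>v v = R *\<^sub>v v + (transpose_mat F * Q * F) *\<^sub>v v"
      unfolding H by (rule add_mult_distrib_mat_vec[OF Rc FtQF v(1)])
    also have "(transpose_mat F * Q * F) *\<^sub>v v = transpose_mat F *\<^sub>v (Q *\<^sub>v (F *\<^sub>v v))"
      using assoc_mult_mat_vec[OF FtQ F v(1)] assoc_mult_mat_vec[OF Ft Qc Fv] by simp
    finally have Hv: "H *\<^sub>v v = R *\<^sub>v v + transpose_mat F *\<^sub>v (Q *\<^sub>v (F *\<^sub>v v))" .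
    have "Matrix.scalar_prod v (H *\<^sub>v v) = Matrix.scalar_prod v (R *\<^sub>v v) + Matrix.scalar_prod v (transpose_mat F *\<^sub>v (Q *\<^sub>v (F *\<^sub>v v)))"
      unfolding Hv by (rule scalar_prod_add_distrib[OF v(1) Rv FtQFv])
    also have "Matrix.scalar_prod v (transpose_mat F *\<^sub>v (Q *\<^sub>v (F *\<^sub>v v))) = Matrix.scalar_prod (F *\<^sub>v v) (Q *\<^sub>v (F *\<^sub>v v))"
    proof -
      have "Matrix.scalar_prod (transpose_mat F *\<^sub>v (Q *\<^sub>v (F *\<^sub>v v))) v = Matrix.scalar_prod (Q *\<^sub>v (F *\<^sub>v v)) (F *\<^sub>v v)"
        by (rule transpose_vec_mult_scalar[OF F v(1) QFv])
      moreover have "Matrix.scalar_prod (transpose_mat F *\<^sub>v (Q *\<^sub>v (F *\<^sub>v v))) v = Matrix.scalar_prod v (transpose_mat F *\<^sub>v (Q *\<^sub>v (F *\<^sub>v v)))"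
        by (rule comm_scalar_prod[OF FtQFv v(1)])
      moreover have "Matrix.scalar_prod (Q *\<^sub>v (F *\<^sub>v v)) (F *\<^sub>v v) = Matrix.scalar_prod (F *\<^sub>v v) (Q *\<^sub>v (F *\<^sub>v v))"
        by (rule comm_scalar_prod[OF QFv Fv])
      ultimately show ?thesis by simp
    qed
    finally have eq: "Matrix.scalar_prod v (H *\<^sub>v v) = Matrix.scalar_prod v (R *\<^sub>v v) + Matrix.scalar_prod (F *\<^sub>v v) (Q *\<^sub>v (F *\<^sub>v v))" .
    have "0 < Matrix.scalar_prod v (R *\<^sub>v v)" using R v(1,2) unfolding pd_mat_def by blast
    moreover have "0 \<le> Matrix.scalar_prod (F *\<^sub>v v) (Q *\<^sub>v (F *\<^sub>v v))" using Q Fv unfolding psd_mat_def by blast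
    moreover have "Matrix.scalar_prod v (H *\<^sub>v v) = 0" unfolding v(3) using v(1) by simp
    ultimately show False using eq by linarith
  qed
qed

theorem corollary4:
  fixes M :: "'a measure" and w :: "'a \<Rightarrow> real vec"
    and n m T :: nat and A B :: "nat \<Rightarrow> real mat" and Q R :: "real mat"
  assumes "T \<ge> 1"
    and "\<forall>t. t + 1 < T \<longrightarrow> A t \<in> carrier_mat n n \<and> B t \<in> carrier_mat n m"
    and "psd_mat (n*T) Q" and "pd_mat (m*T) R"
    and "prob_space M"
    and "\<forall>\<omega> \<in> space M. w \<omega> \<in> carrier_vec (n*T)"
    and "\<forall>i < n*T. (\<lambda>\<omega>. w \<omega> $ i) \<in> borel_measurable M"
    and "\<forall>i < n*T. integrable M (\<lambda>\<omega>. (w \<omega> $ i)^2)"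
  shows "argmin_on (causal_gains n m T) (exp_dev M w n m T A B Q R)
         = argmin_on (causal_gains n m T) (exp_cost M w n m T A B Q R)"
proof -
  note Qpsd = assms(3) and Rpd = assms(4)
  have Qc: "Q \<in> carrier_mat (n*T) (n*T)" and QT: "transpose_mat Q = Q" using Qpsd unfolding psd_mat_def by blast+
  have Rc: "R \<in> carrier_mat (m*T) (m*T)" and RT: "transpose_mat R = R" using Rpd unfolding pd_mat_def by blast+
  have wL2: "vL2 M (n*T) w" unfolding vL2_def L2_def using assms(6,7,8) by blast
  have Zc: "Zmat n T \<in> carrier_mat (n*T) (n*T)" unfolding Zmat_def by (rule mat_carrier)
  have Ac: "blkA n T A \<in> carrier_mat (n*T) (n*T)" unfolding blkA_def by (rule mat_carrier)
  have Bc: "blkB n m T B \<in> carrier_mat (n*T) (m*T)" unfolding blkB_def by (rule mat_carrier)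
  have sZ: "slow (n*T) (n*T) n n (Zmat n T)" unfolding slow_def Zmat_def by simp
  have lA: "blow (n*T) (n*T) n n (blkA n T A)" unfolding blow_def blkA_def by simp
  have lB: "blow (n*T) (m*T) n m (blkB n m T B)" unfolding blow_def blkB_def by simp
  have ZAc: "Zmat n T * blkA n T A \<in> carrier_mat (n*T) (n*T)" using Zc Ac by (rule mult_carrier_mat)
  have sZA: "slow (n*T) (n*T) n n (Zmat n T * blkA n T A)" by (rule slow_mult_low[OF Zc Ac sZ lA])
  have IZAc: "1\<^sub>m (n*T) - Zmat n T * blkA n T A \<in> carrier_mat (n*T) (n*T)" using ZAc by (rule minus_carrier_mat)
  have dZA: "Determinant.det (1\<^sub>m (n*T) - Zmat n T * blkA n T A) \<noteq> 0" using slow_det[OF ZAc sZA] by simp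
  have Gc: "Gmat n T A \<in> carrier_mat (n*T) (n*T)"
    and Ginv: "(1\<^sub>m (n*T) - Zmat n T * blkA n T A) * Gmat n T A = 1\<^sub>m (n*T)"
    unfolding Gmat_def using inv_mat_props[OF IZAc dZA] by blast+
  have lG: "blow (n*T) (n*T) n n (Gmat n T A)" by (rule inv_low[OF ZAc sZA Gc Ginv])
  have ZBc: "Zmat n T * blkB n m T B \<in> carrier_mat (n*T) (m*T)" using Zc Bc by (rule mult_carrier_mat)
  have sZB: "slow (n*T) (m*T) n m (Zmat n T * blkB n m T B)" by (rule slow_mult_low[OF Zc Bc sZ lB])
  have Fc: "Fmat n m T A B \<in> carrier_mat (n*T) (m*T)" unfolding Fmat_def using Gc ZBc by (rule mult_carrier_mat)
  have sF: "slow (n*T) (m*T) n m (Fmat n m T A B)" unfolding Fmat_def by (rule low_mult_slow[OF Gc ZBc lG sZB])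
  define H where "H = R + transpose_mat (Fmat n m T A B) * Q * Fmat n m T A B"
  have dH: "Determinant.det H \<noteq> 0" and Hc: "H \<in> carrier_mat (m*T) (m*T)"
    using pd_det[OF H_def Rpd Qpsd Fc] by blast+
  have Hic: "inv_mat H \<in> carrier_mat (m*T) (m*T)" and HHi: "H * inv_mat H = 1\<^sub>m (m*T)"
    using inv_mat_props[OF Hc dH] by blast+
  define P where "P = inv_mat H * transpose_mat (Fmat n m T A B) * Q * Gmat n T A"
  have Ftc: "transpose_mat (Fmat n m T A B) \<in> carrier_mat (m*T) (n*T)" using Fc by simp
  have Pc: "P \<in> carrier_mat (m*T) (n*T)" unfolding P_def
    by (rule mult_carrier_mat[OF mult_carrier_mat[OF mult_carrier_mat[OF Hic Ftc] Qc] Gc])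
  have us_eq: "opt_u n m T A B Q R v = - (P *\<^sub>v v)" for v
    unfolding opt_u_def Let_def P_def H_def ..
  have xs_eq: "opt_x n m T A B Q R v = Fmat n m T A B *\<^sub>v (- (P *\<^sub>v v)) + Gmat n T A *\<^sub>v v" for v
    unfolding opt_x_def us_eq ..
  define c where "c = (\<lambda>\<omega>. quad Q (opt_x n m T A B Q R (w \<omega>)) + quad R (opt_u n m T A B Q R (w \<omega>)))"
  have uL2: "vL2 M (m*T) (\<lambda>\<omega>. opt_u n m T A B Q R (w \<omega>))"
    unfolding us_eq by (rule vL2_uminus[OF vL2_mult[OF Pc wL2]])
  have xL2: "vL2 M (n*T) (\<lambda>\<omega>. opt_x n m T A B Q R (w \<omega>))"
    unfolding opt_x_def by (rule vL2_add[OF vL2_mult[OF Fc uL2] vL2_mult[OF Gc wL2]])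
  have cint: "integrable M c" unfolding c_def
    by (rule Bochner_Integration.integrable_add[OF vL2_quad[OF Qc xL2] vL2_quad[OF Rc uL2]])
  have dev_eq: "exp_dev M w n m T A B Q R K = exp_cost M w n m T A B Q R K - integral\<^sup>L M c"
    if K: "K \<in> causal_gains n m T" for K
  proof -
    have Kc: "K \<in> carrier_mat (m*T) (n*T)" using K unfolding causal_gains_def by blast
    have lK: "blow (m*T) (n*T) m n K" using K unfolding causal_gains_def blow_def by blast
    have FKc: "Fmat n m T A B * K \<in> carrier_mat (n*T) (n*T)" using Fc Kc by (rule mult_carrier_mat)
    have sFK: "slow (n*T) (n*T) n n (Fmat n m T A B * K)" by (rule slow_mult_low[OF Fc Kc sF lK])
    have IFKc: "1\<^sub>m (n*T) - Fmat n m T A B * K \<in> carrier_mat (n*T) (n*T)" using FKc by (rule minus_carrier_mat)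
    have dFK: "Determinant.det (1\<^sub>m (n*T) - Fmat n m T A B * K) \<noteq> 0" using slow_det[OF FKc sFK] by simp
    define X where "X = inv_mat (1\<^sub>m (n*T) - Fmat n m T A B * K)"
    have Xc: "X \<in> carrier_mat (n*T) (n*T)" and Xinv: "(1\<^sub>m (n*T) - Fmat n m T A B * K) * X = 1\<^sub>m (n*T)"
      unfolding X_def using inv_mat_props[OF IFKc dFK] by blast+
    have clx: "cl_x n m T A B K v = X *\<^sub>v (Gmat n T A *\<^sub>v v)" for v unfolding cl_x_def X_def ..
    have xL2': "vL2 M (n*T) (\<lambda>\<omega>. cl_x n m T A B K (w \<omega>))"
      unfolding clx by (rule vL2_mult[OF Xc vL2_mult[OF Gc wL2]])
    have uL2': "vL2 M (m*T) (\<lambda>\<omega>. cl_u n m T A B K (w \<omega>))"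
      unfolding cl_u_def by (rule vL2_mult[OF Kc xL2'])
    define f where "f = (\<lambda>\<omega>. quad Q (cl_x n m T A B K (w \<omega>)) + quad R (cl_u n m T A B K (w \<omega>)))"
    have fint: "integrable M f" unfolding f_def
      by (rule Bochner_Integration.integrable_add[OF vL2_quad[OF Qc xL2'] vL2_quad[OF Rc uL2']])
    have pw: "quad Q (cl_x n m T A B K (w \<omega>) - opt_x n m T A B Q R (w \<omega>))
                     + quad R (cl_u n m T A B K (w \<omega>) - opt_u n m T A B Q R (w \<omega>)) = f \<omega> - c \<omega>"
      if om: "\<omega> \<in> space M" for \<omega>
    proof -
      define v where "v = w \<omega>"
      have v: "v \<in> carrier_vec (n*T)" unfolding v_def using assms(6) om by blast
      define g where "g = Gmat n T A *\<^sub>v v"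
      have g: "g \<in> carrier_vec (n*T)" unfolding g_def using Gc v by (rule mult_mat_vec_carrier)
      define x where "x = cl_x n m T A B K v"
      have x: "x \<in> carrier_vec (n*T)" unfolding x_def clx g_def[symmetric] using Xc g by (rule mult_mat_vec_carrier)
      have u: "K *\<^sub>v x \<in> carrier_vec (m*T)" using Kc x by (rule mult_mat_vec_carrier)
      have FKx: "(Fmat n m T A B * K) *\<^sub>v x = Fmat n m T A B *\<^sub>v (K *\<^sub>v x)"
        by (rule assoc_mult_mat_vec[OF Fc Kc x])
      have Fu: "Fmat n m T A B *\<^sub>v (K *\<^sub>v x) \<in> carrier_vec (n*T)" using Fc u by (rule mult_mat_vec_carrier)
      have "(1\<^sub>m (n*T) - Fmat n m T A B * K) *\<^sub>v x = ((1\<^sub>m (n*T) - Fmat n m T A B * K) * X) *\<^sub>v g"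
        unfolding x_def clx g_def[symmetric] by (rule assoc_mult_mat_vec[OF IFKc Xc g, symmetric])
      also have "\<dots> = g" unfolding Xinv using g by simp
      finally have "(1\<^sub>m (n*T) - Fmat n m T A B * K) *\<^sub>v x = g" .
      moreover have "(1\<^sub>m (n*T) - Fmat n m T A B * K) *\<^sub>v x = 1\<^sub>m (n*T) *\<^sub>v x - (Fmat n m T A B * K) *\<^sub>v x"
        by (rule minus_mult_distrib_mat_vec[OF one_carrier_mat FKc x])
      ultimately have xg: "x - Fmat n m T A B *\<^sub>v (K *\<^sub>v x) = g" using x FKx by simp
      have "x = Fmat n m T A B *\<^sub>v (K *\<^sub>v x) + (x - Fmat n m T A B *\<^sub>v (K *\<^sub>v x))"
        by (intro eq_vecI) (simp_all del: index_mult_mat_vec add: carrier_vecD[OF x] carrier_vecD[OF Fu] carrier_matD[OF Fc])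
      then have xeq: "x = Fmat n m T A B *\<^sub>v (K *\<^sub>v x) + g" unfolding xg .
      have "quad Q x + quad R (K *\<^sub>v x) = quad Q (x - opt_x n m T A B Q R v) + quad R (K *\<^sub>v x - opt_u n m T A B Q R v)
           + (quad Q (opt_x n m T A B Q R v) + quad R (opt_u n m T A B Q R v))"
        by (rule pointwise[OF Qc QT Rc RT Fc Gc Hic[unfolded H_def] HHi[unfolded H_def] v u xeq[unfolded g_def]
              us_eq[unfolded P_def H_def] xs_eq[unfolded us_eq[symmetric]]])
      then show ?thesis unfolding f_def c_def cl_u_def v_def x_def by simp
    qed
    have "exp_dev M w n m T A B Q R K = integral\<^sup>L M (\<lambda>\<omega>. f \<omega> - c \<omega>)"
      unfolding exp_dev_def by (rule Bochner_Integration.integral_cong[OF refl pw])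
    also have "\<dots> = integral\<^sup>L M f - integral\<^sup>L M c" by (rule Bochner_Integration.integral_diff[OF fint cint])
    also have "integral\<^sup>L M f = exp_cost M w n m T A B Q R K" unfolding exp_cost_def f_def ..
    finally show ?thesis .
  qed
  show ?thesis unfolding argmin_on_def using dev_eq by auto
qed

end
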